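(* For all $T,S\in\,!\Lambda$, if $T\Rightarrow_v S$ then $S\Rightarrow_v T^*$.
   Context: Bang calculus terms $!\Lambda$: $T,S,R ::= x \mid \lambda x.T \mid T\,S \mid \mathrm{der}\,T \mid\ !T$ over a countably infinite set of variables, $\lambda$ the only binder, up to $\alpha$-conversion; $T\{S/x\}$ is capture-avoiding substitution. Parallel $v$-reduction $\Rightarrow_v$ is the least relation closed under the rules: $x\Rightarrow_v x$; if $T\Rightarrow_v S$ then $\lambda x.T\Rightarrow_v\lambda x.S$, $!T\Rightarrow_v\,!S$ and $\mathrm{der}\,T\Rightarrow_v\mathrm{der}\,S$; if $T\Rightarrow_v S$ and $R\Rightarrow_v Q$ then $T\,R\Rightarrow_v S\,Q$ and $(\lambda x.T)(!R)\Rightarrow_v S\{Q/x\}$. The full development $T^*$ is defined by induction: $x^*=x$, $(\lambda x.T)^*=\lambda x.T^*$, $(!T)^*=\,!(T^* )$, $(\mathrm{der}\,T)^*=\mathrm{der}(T^* )$, $((\lambda x.T)(!S))^*=T^*\{S^*/x\}$, and $(T\,S)^*=T^*\,S^*$ if $T$ is not an abstraction or $S$ is not a box. *)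

theory Defs
  imports Main
begin

text \<open>Bang calculus terms, up to alpha-conversion, represented with de Bruijn indices.
  Var n is the variable with index n; Lam binds index 0.\<close>

datatype bterm = Var nat | Lam bterm | App bterm bterm | Der bterm | Bang bterm

fun lift :: "bterm \<Rightarrow> nat \<Rightarrow> bterm" where
  "lift (Var i) k = (if i < k then Var i else Var (Suc i))"
| "lift (Lam t) k = Lam (lift t (Suc k))"
| "lift (App s t) k = App (lift s k) (lift t k)"
| "lift (Der t) k = Der (lift t k)"
| "lift (Bang t) k = Bang (lift t k)"

text \<open>Capture-avoiding substitution: subst t s k replaces index k by s in t,
  decrementing the free indices above k (the binder is removed).\<close>
fun subst :: "bterm \<Rightarrow> bterm \<Rightarrow> nat \<Rightarrow> bterm" where
  "subst (Var i) s k = (if k < i then Var (i - 1) else if i = k then s else Var i)"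
| "subst (Lam t) s k = Lam (subst t (lift s 0) (Suc k))"
| "subst (App t u) s k = App (subst t s k) (subst u s k)"
| "subst (Der t) s k = Der (subst t s k)"
| "subst (Bang t) s k = Bang (subst t s k)"

inductive par_v :: "bterm \<Rightarrow> bterm \<Rightarrow> bool" where
  pv_var: "par_v (Var x) (Var x)"
| pv_lam: "par_v t s \<Longrightarrow> par_v (Lam t) (Lam s)"
| pv_bang: "par_v t s \<Longrightarrow> par_v (Bang t) (Bang s)"
| pv_der: "par_v t s \<Longrightarrow> par_v (Der t) (Der s)"
| pv_app: "par_v t s \<Longrightarrow> par_v r q \<Longrightarrow> par_v (App t r) (App s q)"
| pv_beta: "par_v t s \<Longrightarrow> par_v r q \<Longrightarrow> par_v (App (Lam t) (Bang r)) (subst s q 0)"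

fun dev :: "bterm \<Rightarrow> bterm" where
  "dev (Var x) = Var x"
| "dev (Lam t) = Lam (dev t)"
| "dev (Bang t) = Bang (dev t)"
| "dev (Der t) = Der (dev t)"
| "dev (App (Lam t) (Bang s)) = subst (dev t) (dev s) 0"
| "dev (App t s) = App (dev t) (dev s)"

end

theory Submission
  imports Defs
begin

lemma lift_lift:
  "i < k + 1 \<Longrightarrow> lift (lift t i) (Suc k) = lift (lift t k) i"
  by (induct t arbitrary: i k) auto

lemma lift_subst [simp]:
  "j < i + 1 \<Longrightarrow> lift (subst t s j) i = subst (lift t (i + 1)) (lift s i) j"
  by (induct t arbitrary: i j s)
    (simp_all add: diff_Suc lift_lift split: nat.split)

lemma lift_subst_lt:
  "i < j + 1 \<Longrightarrow> lift (subst t s j) i = subst (lift t i) (lift s i) (j + 1)"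
  by (induct t arbitrary: i j s) (auto simp: lift_lift)

lemma subst_lift [simp]: "subst (lift t k) s k = t"
  by (induct t arbitrary: k s) simp_all

lemma subst_subst:
  "i < j + 1 \<Longrightarrow> subst (subst t (lift v i) (Suc j)) (subst u v j) i = subst (subst t u i) v j"
  by (induct t arbitrary: i j u v)
    (simp_all add: diff_Suc lift_lift [symmetric] lift_subst_lt split: nat.split)

lemma par_refl: "par_v t t"
  by (induct t) (auto intro: par_v.intros)

lemma par_lift: "par_v t t' \<Longrightarrow> par_v (lift t k) (lift t' k)"
proof (induct arbitrary: k rule: par_v.induct)
  case (pv_beta t s r q)
  have "par_v (App (Lam (lift t (Suc k))) (Bang (lift r k))) (subst (lift s (Suc k)) (lift q k) 0)"
    using pv_beta by (intro par_v.pv_beta) auto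
  then show ?case by (simp add: lift_subst)
qed (auto intro: par_v.intros)

lemma par_subst: "par_v t t' \<Longrightarrow> par_v s s' \<Longrightarrow> par_v (subst t s k) (subst t' s' k)"
proof (induct arbitrary: s s' k rule: par_v.induct)
  case (pv_var x) then show ?case by (auto intro: par_refl)
next
  case (pv_beta t t' r r')
  have "par_v (App (Lam (subst t (lift s 0) (Suc k))) (Bang (subst r s k)))
     (subst (subst t' (lift s' 0) (Suc k)) (subst r' s' k) 0)"
    using pv_beta by (intro par_v.pv_beta) (auto intro: par_lift)
  then show ?case by (simp add: subst_subst)
next
  case (pv_lam t t')
  then show ?case by (simp add: par_lift par_v.pv_lam)
qed (auto intro: par_v.intros par_lift)

lemma lam_inv: "par_v (Lam a) (Lam b) \<Longrightarrow> par_v a b"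
  by (erule par_v.cases) auto

lemma bang_inv: "par_v (Bang a) (Bang b) \<Longrightarrow> par_v a b"
  by (erule par_v.cases) auto

theorem mainTheorem5:
  fixes T S :: bterm
  assumes "par_v T S"
  shows "par_v S (dev T)"
  using assms
proof (induct rule: par_v.induct)
  case (pv_app t s r q)
  show ?case
  proof (cases "\<exists>t0 r0. t = Lam t0 \<and> r = Bang r0")
    case True
    then obtain t0 r0 where e: "t = Lam t0" "r = Bang r0" by blast
    from pv_app e have "par_v (Lam t0) s" by simp
    then obtain s0 where s0a: "s = Lam s0"
      by (cases rule: par_v.cases) auto
    from pv_app e s0a have "par_v (Lam s0) (Lam (dev t0))" by simp
    then have s0: "s = Lam s0" "par_v s0 (dev t0)" using s0a
      by (auto dest: lam_inv)
    from pv_app e have "par_v (Bang r0) q" by simp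
    then obtain q0 where q0a: "q = Bang q0"
      by (cases rule: par_v.cases) auto
    from pv_app e q0a have "par_v (Bang q0) (Bang (dev r0))" by simp
    then have q0: "q = Bang q0" "par_v q0 (dev r0)" using q0a
      by (auto dest: bang_inv)
    show ?thesis using e s0 q0 by (simp add: par_v.pv_beta)
  next
    case False
    then have "dev (App t r) = App (dev t) (dev r)"
      by (cases t; cases r) auto
    then show ?thesis using pv_app by (simp add: par_v.pv_app)
  qed
next
  case (pv_beta t s r q)
  then show ?case by (simp add: par_subst)
qed (auto intro: par_v.intros)

end
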